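(* Let $(X,\rho,\mu)$ be a $K$-doubling metric measure space and $x\in X$. The following are equivalent: (i) $x$ is an isolated point of $X$ for the metric topology of $\rho$; (ii) $x$ is an isolated point of $X$ for the $\mu$-topology; (iii) $\mu(\{x\})>0$.
   Context: A $K$-doubling metric measure space ($K>0$) is a triple $(X,\rho,\mu)$ where $(X,\rho)$ is a complete separable metric space and $\mu$ is a Borel-regular outer measure on $X$ with $0<\mu(B_{2r}(x))\le K\mu(B_r(x))<+\infty$ for all $x\in X$, $r>0$. A point $x\in E\subseteq X$ is a $\mu$-interior point of $E$ if there is a Borel set $B\subseteq E$ with $\lim_{r\to0^+}\mu(B_r(x)\setminus B)/\mu(B_r(x))=0$; in that case $E$ is called a $\mu$-neighborhood of $x$. The $\mu$-topology is the topology on $X$ whose open sets are the sets that are $\mu$-neighborhoods of each of their points. A point $x$ is $\mu$-isolated if $\{x\}$ is a $\mu$-neighborhood of $x$. *)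

theory Defs
  imports "HOL-Analysis.Analysis"
begin

text \<open>The metric space (X, rho) is the whole type 'a, a complete separable metric space
(class metric_space with complete_space and second_countable_topology).\<close>

definition outer_measure :: "('a set \<Rightarrow> ennreal) \<Rightarrow> bool" where
  "outer_measure \<mu> \<longleftrightarrow> \<mu> {} = 0 \<and> (\<forall>A B. A \<subseteq> B \<longrightarrow> \<mu> A \<le> \<mu> B)
     \<and> (\<forall>A :: nat \<Rightarrow> 'a set. \<mu> (\<Union>n. A n) \<le> (\<Sum>n. \<mu> (A n)))"

definition caratheodory_measurable :: "('a set \<Rightarrow> ennreal) \<Rightarrow> 'a set \<Rightarrow> bool" where
  "caratheodory_measurable \<mu> E \<longleftrightarrow> (\<forall>A. \<mu> A = \<mu> (A \<inter> E) + \<mu> (A - E))"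

definition borel_regular_outer_measure :: "('a::topological_space set \<Rightarrow> ennreal) \<Rightarrow> bool" where
  "borel_regular_outer_measure \<mu> \<longleftrightarrow> outer_measure \<mu>
     \<and> (\<forall>B \<in> sets borel. caratheodory_measurable \<mu> B)
     \<and> (\<forall>A. \<exists>B \<in> sets borel. A \<subseteq> B \<and> \<mu> B = \<mu> A)"

definition doubling :: "real \<Rightarrow> ('a::metric_space set \<Rightarrow> ennreal) \<Rightarrow> bool" where
  "doubling K \<mu> \<longleftrightarrow> K > 0 \<and> (\<forall>x r. r > 0 \<longrightarrow>
      0 < \<mu> (ball x (2 * r)) \<and> \<mu> (ball x (2 * r)) \<le> ennreal K * \<mu> (ball x r)
      \<and> \<mu> (ball x r) < \<infinity>)"

definition K_doubling_mms :: "real \<Rightarrow> ('a::{metric_space, complete_space, second_countable_topology} set \<Rightarrow> ennreal) \<Rightarrow> bool" where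
  "K_doubling_mms K \<mu> \<longleftrightarrow> borel_regular_outer_measure \<mu> \<and> doubling K \<mu>"

definition mu_nbhd :: "('a::metric_space set \<Rightarrow> ennreal) \<Rightarrow> 'a set \<Rightarrow> 'a \<Rightarrow> bool" where
  "mu_nbhd \<mu> E x \<longleftrightarrow> x \<in> E \<and> (\<exists>B \<in> sets borel. B \<subseteq> E \<and>
      ((\<lambda>r. \<mu> (ball x r - B) / \<mu> (ball x r)) \<longlongrightarrow> 0) (at_right 0))"

definition mu_open :: "('a::metric_space set \<Rightarrow> ennreal) \<Rightarrow> 'a set \<Rightarrow> bool" where
  "mu_open \<mu> U \<longleftrightarrow> (\<forall>x \<in> U. mu_nbhd \<mu> U x)"

end

theory Submission
  imports Defs
begin

lemma open_single_iff:
  fixes x :: "'a::metric_space"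
  shows "open {x} \<longleftrightarrow> (\<exists>e>0. \<forall>y. dist y x < e \<longrightarrow> y = x)"
  unfolding open_dist by (auto simp: dist_commute)

lemma key_induct:
  fixes \<mu> :: "'a::{metric_space, complete_space, second_countable_topology} set \<Rightarrow> ennreal"
  assumes mms: "K_doubling_mms K \<mu>"
    and nis: "\<forall>e>0. \<exists>y. y \<noteq> x \<and> dist y x < e"
  shows "t > 0 \<Longrightarrow> of_nat N * \<mu> {x} \<le> ennreal K * (ennreal K * \<mu> (ball x t))"
proof (induction N arbitrary: t)
  case 0 then show ?case by simp
next
  case (Suc N)
  have om: "outer_measure \<mu>" and car: "\<forall>B \<in> sets borel. caratheodory_measurable \<mu> B"
    and dbl: "\<And>y r. r > 0 \<Longrightarrow> \<mu> (ball y (2 * r)) \<le> ennreal K * \<mu> (ball y r)"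
    using mms unfolding K_doubling_mms_def borel_regular_outer_measure_def doubling_def by auto
  have mono: "\<And>A B. A \<subseteq> B \<Longrightarrow> \<mu> A \<le> \<mu> B" using om unfolding outer_measure_def by auto
  obtain y where y: "y \<noteq> x" "dist y x < t/2" using nis Suc.prems
    by (metis half_gt_zero)
  define s where "s = dist y x"
  have s: "s > 0" "s < t/2" using y s_def by auto
  have IH: "of_nat N * \<mu> {x} \<le> ennreal K * (ennreal K * \<mu> (ball x (s/2)))"
    using Suc.IH s by auto
  have d1: "\<mu> (ball y (2 * s)) \<le> ennreal K * \<mu> (ball y s)" using dbl s by auto
  have d2: "\<mu> (ball y (2 * (s/2))) \<le> ennreal K * \<mu> (ball y (s/2))" using dbl[of "s/2" y] s by auto
  have "\<mu> {x} \<le> \<mu> (ball y (2 * s))" using s s_def by (intro mono) (auto simp: dist_commute)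
  also have "\<dots> \<le> ennreal K * (ennreal K * \<mu> (ball y (s/2)))"
    using d1 d2 by (simp add: order_trans mult_left_mono)
  finally have X: "\<mu> {x} \<le> ennreal K * (ennreal K * \<mu> (ball y (s/2)))" .
  have cm: "caratheodory_measurable \<mu> (ball x (s/2))" using car by auto
  hence eq: "\<mu> (ball x t) = \<mu> (ball x t \<inter> ball x (s/2)) + \<mu> (ball x t - ball x (s/2))"
    unfolding caratheodory_measurable_def by (rule spec)
  have i1: "ball x t \<inter> ball x (s/2) = ball x (s/2)" using s by auto
  have i2: "ball y (s/2) \<subseteq> ball x t - ball x (s/2)"
  proof
    fix z assume z: "z \<in> ball y (s/2)"
    hence "dist y z < s/2" by auto
    moreover have "s \<le> dist y z + dist x z" using s_def dist_triangle[of y x z]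
      by (simp add: dist_commute)
    moreover have "dist x z \<le> dist x y + dist y z" by (rule dist_triangle)
    ultimately show "z \<in> ball x t - ball x (s/2)" using s s_def by (auto simp: dist_commute)
  qed
  have "\<mu> (ball x (s/2)) + \<mu> (ball y (s/2)) \<le> \<mu> (ball x t)"
    using eq i1 mono[OF i2] by (metis add_left_mono)
  hence M: "ennreal K * (ennreal K * (\<mu> (ball x (s/2)) + \<mu> (ball y (s/2))))
      \<le> ennreal K * (ennreal K * \<mu> (ball x t))" by (simp add: mult_left_mono)
  have "of_nat (Suc N) * \<mu> {x} = of_nat N * \<mu> {x} + \<mu> {x}" by (simp add: algebra_simps)
  also have "\<dots> \<le> ennreal K * (ennreal K * \<mu> (ball x (s/2))) + ennreal K * (ennreal K * \<mu> (ball y (s/2)))"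
    using IH X by (rule add_mono)
  also have "\<dots> = ennreal K * (ennreal K * (\<mu> (ball x (s/2)) + \<mu> (ball y (s/2))))"
    by (simp add: algebra_simps)
  also have "\<dots> \<le> ennreal K * (ennreal K * \<mu> (ball x t))" by (rule M)
  finally show ?case .
qed

theorem proposition2p2:
  fixes \<mu> :: "'a::{metric_space, complete_space, second_countable_topology} set \<Rightarrow> ennreal"
    and K :: real and x :: 'a
  assumes "K_doubling_mms K \<mu>"
  shows "(open {x} \<longleftrightarrow> mu_open \<mu> {x}) \<and> (mu_open \<mu> {x} \<longleftrightarrow> \<mu> {x} > 0)"
proof -
  have om: "outer_measure \<mu>" and car: "\<forall>B \<in> sets borel. caratheodory_measurable \<mu> B"
    and pos: "\<And>y r. r > 0 \<Longrightarrow> 0 < \<mu> (ball y r)"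
    and fin: "\<And>y r. r > 0 \<Longrightarrow> \<mu> (ball y r) < \<infinity>"
    and Kpos: "K > 0"
    using assms unfolding K_doubling_mms_def borel_regular_outer_measure_def doubling_def
    by (auto, metis field_sum_of_halves half_gt_zero mult_2)
  have mono: "\<And>A B. A \<subseteq> B \<Longrightarrow> \<mu> A \<le> \<mu> B" using om unfolding outer_measure_def by auto
  have mu0: "\<mu> {} = 0" using om unfolding outer_measure_def by auto
  have xb: "{x} \<in> sets borel" by (simp add: borel_closed)
  have i_ii: "mu_open \<mu> {x}" if op: "open {x}"
  proof -
    obtain e where e: "e > 0" "\<forall>y. dist y x < e \<longrightarrow> y = x" using open_single_iff[THEN iffD1, OF op] by blast
    have ev: "eventually (\<lambda>r. \<mu> (ball x r - {x}) / \<mu> (ball x r) = 0) (at_right (0::real))"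
    proof -
      have "eventually (\<lambda>r. r < e) (at_right (0::real))"
        using e(1) eventually_at_right_field by blast
      thus ?thesis
      proof (rule eventually_mono)
        fix r assume "r < e"
        hence "ball x r - {x} = {}" using e by (auto simp: dist_commute)
        thus "\<mu> (ball x r - {x}) / \<mu> (ball x r) = 0" using mu0 by (metis ennreal_zero_divide)
      qed
    qed
    show ?thesis unfolding mu_open_def mu_nbhd_def
      using xb tendsto_eventually[OF ev] by blast
  qed
  have ii_iii: "\<mu> {x} > 0" if "mu_open \<mu> {x}"
  proof (rule ccontr)
    assume "\<not> \<mu> {x} > 0"
    hence z: "\<mu> {x} = 0" by (simp add: not_gr_zero)
    from that obtain B where B: "B \<in> sets borel" "B \<subseteq> {x}"
      and lim: "((\<lambda>r. \<mu> (ball x r - B) / \<mu> (ball x r)) \<longlongrightarrow> 0) (at_right 0)"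
      unfolding mu_open_def mu_nbhd_def by auto
    have "eventually (\<lambda>r. \<mu> (ball x r - B) / \<mu> (ball x r) < 1) (at_right (0::real))"
      using order_tendstoD(2)[OF lim] by simp
    moreover have "eventually (\<lambda>r. r > 0) (at_right (0::real))"
      by (simp add: eventually_at_right_less)
    ultimately have "eventually (\<lambda>r. r > 0 \<and> \<mu> (ball x r - B) / \<mu> (ball x r) < 1) (at_right (0::real))"
      by (rule eventually_conj[rotated])
    then obtain r where r: "r > 0" "\<mu> (ball x r - B) / \<mu> (ball x r) < 1"
      using eventually_happens' trivial_limit_at_right_real by blast
    have "caratheodory_measurable \<mu> {x}" using car xb by auto
    hence "\<mu> (ball x r) = \<mu> (ball x r \<inter> {x}) + \<mu> (ball x r - {x})"
      unfolding caratheodory_measurable_def by (rule spec)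
    also have "\<dots> \<le> \<mu> {x} + \<mu> (ball x r - B)"
      using B by (intro add_mono mono) auto
    finally have "\<mu> (ball x r) \<le> \<mu> (ball x r - B)" using z by simp
    hence "\<mu> (ball x r) / \<mu> (ball x r) \<le> \<mu> (ball x r - B) / \<mu> (ball x r)"
      by (rule divide_right_mono_ennreal)
    moreover have "\<mu> (ball x r) / \<mu> (ball x r) = 1"
      using pos[OF r(1), of x] fin[OF r(1), of x] by (intro ennreal_divide_self) auto
    ultimately show False using r(2) by simp
  qed
  have iii_i: "open {x}" if p: "\<mu> {x} > 0"
  proof (rule ccontr)
    assume "\<not> open {x}"
    hence "\<not> (\<exists>e>0. \<forall>y. dist y x < e \<longrightarrow> y = x)" using open_single_iff[of x] by argo
    hence nis: "\<forall>e>0. \<exists>y. y \<noteq> x \<and> dist y x < e" by (simp add: conj_commute)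
    have b: "\<And>N. of_nat N * \<mu> {x} \<le> ennreal K * (ennreal K * \<mu> (ball x 1))"
      using key_induct[OF assms nis] by simp
    have "\<mu> {x} \<le> \<mu> (ball x 1)" by (intro mono) auto
    hence "\<mu> {x} < \<infinity>" using fin[of 1 x] by simp
    then obtain a where a0: "\<mu> {x} = ennreal a" "a \<ge> 0"
      by (cases "\<mu> {x}" rule: ennreal_cases) auto
    have a: "\<mu> {x} = ennreal a" "a > 0" using a0 p by auto
    have "\<mu> (ball x 1) < \<infinity>" using fin[of 1 x] by simp
    then obtain m where m: "\<mu> (ball x 1) = ennreal m" "m \<ge> 0"
      by (cases "\<mu> (ball x 1)" rule: ennreal_cases) auto
    obtain N :: nat where N: "real N > K * K * m / a" using reals_Archimedean2 by blast
    have "K * K * m < real N * a" using N a(2) by (simp add: field_simps)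
    have "ennreal (real N * a) \<le> ennreal (K * K * m)"
      using b[of N] a m Kpos by (simp add: ennreal_mult ennreal_of_nat_eq_real_of_nat mult.assoc)
    moreover have "0 \<le> K * K * m" using Kpos m by simp
    ultimately have "real N * a \<le> K * K * m"
      by (simp add: ennreal_le_iff2) linarith
    thus False using \<open>K * K * m < real N * a\<close> by simp
  qed
  show ?thesis using i_ii ii_iii iii_i by blast
qed

end
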